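(* For every horizon $T\ge 1$ and every number of actions $A\ge 2$ there exists a deterministic MDP with $A$ actions and horizon $T$ such that, with $Q^1=Q^{\pi^{\mathrm{rand}}}$ and $Q^{i+1}=\mathrm{QVI}(Q^i)$, for every $i\in\{1,\dots,T-1\}$ no policy in $\Pi(Q^i)$ is optimal.
   Context: Deterministic finite-horizon MDP $\mathcal M=(\mathcal S,\mathcal A,T,s_1,f,R)$ as usual: finite states and actions ($A=|\mathcal A|$), fixed start state $s_1$, transitions $s_{t+1}=f(s_t,a_t)$, rewards $R(s_t,a_t)$, steps $t\in[T]=\{1,\dots,T\}$, no discounting. A policy $\pi=(\pi_1,\dots,\pi_T)$ has $\pi_t:\mathcal S\to\Delta(\mathcal A)$; for deterministic $\pi_t$ write $\pi_t(s)$ for its action. $Q^\pi_t(s,a)=\mathbb E_\pi[\sum_{t'=t}^T R(s_{t'},a_{t'})\mid s_t=s,a_t=a]$. $J(\pi)=\mathbb E_\pi[\sum_{t=1}^TR(s_t,a_t)]$, and $\pi$ is optimal if $J(\pi)=\max_{\pi'}J(\pi')$. The uniformly random policy is $\pi^{\mathrm{rand}}_t(a\mid s)=1/A$. For a time-indexed function $Q=(Q_t)_{t\in[T]}$, $Q_t:\mathcal S\times\mathcal A\to\mathbb R$, Q-value iteration gives $Q'=\mathrm{QVI}(Q)$ with $Q'_t(s,a)=R(s,a)+\max_{a'\in\mathcal A}Q_{t+1}(f(s,a),a')$ for $t<T$ and $Q'_T(s,a)=R(s,a)$. $\Pi(Q)$ denotes the set of deterministic policies $\pi$ with $\pi_t(s)\in\arg\max_{a\in\mathcal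 A}Q_t(s,a)$ for all $s\in\mathcal S$, $t\in[T]$. *)

theory Defs
  imports Complex_Main
begin

text \<open>Deterministic finite-horizon MDP, represented with explicit carriers:
  states are natural numbers in a finite set S, actions are the numbers 0..<A,
  transitions f :: state => action => state, rewards R :: state => action => real,
  steps t in {1..T}. A (stochastic, time-dependent) policy pi is given by
  pi t s a = probability of action a in state s at step t.\<close>

definition valid_mdp :: "nat \<Rightarrow> nat set \<Rightarrow> nat \<Rightarrow> (nat \<Rightarrow> nat \<Rightarrow> nat) \<Rightarrow> bool" where
  "valid_mdp A S s1 f \<longleftrightarrow> finite S \<and> s1 \<in> S \<and> (\<forall>s\<in>S. \<forall>a<A. f s a \<in> S)"

definition is_policy :: "nat \<Rightarrow> nat \<Rightarrow> nat set \<Rightarrow> (nat \<Rightarrow> nat \<Rightarrow> nat \<Rightarrow> real) \<Rightarrow> bool" where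
  "is_policy A T S pol \<longleftrightarrow>
     (\<forall>t\<in>{1..T}. \<forall>s\<in>S. (\<forall>a<A. 0 \<le> pol t s a) \<and> (\<Sum>a<A. pol t s a) = 1)"

text \<open>Expected reward-to-go with k steps remaining (i.e. starting at step T - k + 1):
  Vrem k s = V^pi_{T-k+1}(s), Vrem 0 = 0.\<close>
fun Vrem :: "nat \<Rightarrow> nat \<Rightarrow> (nat \<Rightarrow> nat \<Rightarrow> nat) \<Rightarrow> (nat \<Rightarrow> nat \<Rightarrow> real)
              \<Rightarrow> (nat \<Rightarrow> nat \<Rightarrow> nat \<Rightarrow> real) \<Rightarrow> nat \<Rightarrow> nat \<Rightarrow> real" where
  "Vrem A T f R pol 0 s = 0"
| "Vrem A T f R pol (Suc k) s =
     (\<Sum>a<A. pol (T - k) s a * (R s a + Vrem A T f R pol k (f s a)))"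

definition Qpol :: "nat \<Rightarrow> nat \<Rightarrow> (nat \<Rightarrow> nat \<Rightarrow> nat) \<Rightarrow> (nat \<Rightarrow> nat \<Rightarrow> real)
              \<Rightarrow> (nat \<Rightarrow> nat \<Rightarrow> nat \<Rightarrow> real) \<Rightarrow> nat \<Rightarrow> nat \<Rightarrow> nat \<Rightarrow> real" where
  "Qpol A T f R pol t s a = R s a + Vrem A T f R pol (T - t) (f s a)"

definition Jval :: "nat \<Rightarrow> nat \<Rightarrow> nat \<Rightarrow> (nat \<Rightarrow> nat \<Rightarrow> nat) \<Rightarrow> (nat \<Rightarrow> nat \<Rightarrow> real)
              \<Rightarrow> (nat \<Rightarrow> nat \<Rightarrow> nat \<Rightarrow> real) \<Rightarrow> real" where
  "Jval A T s1 f R pol = Vrem A T f R pol T s1"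

definition optimal :: "nat \<Rightarrow> nat \<Rightarrow> nat set \<Rightarrow> nat \<Rightarrow> (nat \<Rightarrow> nat \<Rightarrow> nat) \<Rightarrow> (nat \<Rightarrow> nat \<Rightarrow> real)
              \<Rightarrow> (nat \<Rightarrow> nat \<Rightarrow> nat \<Rightarrow> real) \<Rightarrow> bool" where
  "optimal A T S s1 f R pol \<longleftrightarrow> is_policy A T S pol \<and>
     (\<forall>pol'. is_policy A T S pol' \<longrightarrow> Jval A T s1 f R pol' \<le> Jval A T s1 f R pol)"

definition rand_policy :: "nat \<Rightarrow> nat \<Rightarrow> nat \<Rightarrow> nat \<Rightarrow> real" where
  "rand_policy A t s a = 1 / real A"

definition det_policy :: "(nat \<Rightarrow> nat \<Rightarrow> nat) \<Rightarrow> nat \<Rightarrow> nat \<Rightarrow> nat \<Rightarrow> real" where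
  "det_policy pol t s a = (if a = pol t s then 1 else 0)"

definition QVI :: "nat \<Rightarrow> nat \<Rightarrow> (nat \<Rightarrow> nat \<Rightarrow> nat) \<Rightarrow> (nat \<Rightarrow> nat \<Rightarrow> real)
              \<Rightarrow> (nat \<Rightarrow> nat \<Rightarrow> nat \<Rightarrow> real) \<Rightarrow> nat \<Rightarrow> nat \<Rightarrow> nat \<Rightarrow> real" where
  "QVI A T f R Q = (\<lambda>t s a. if t < T
       then R s a + Max ((\<lambda>a'. Q (Suc t) (f s a) a') ` {..<A})
       else R s a)"

definition greedy :: "nat \<Rightarrow> nat \<Rightarrow> nat set \<Rightarrow> (nat \<Rightarrow> nat \<Rightarrow> nat \<Rightarrow> real)
              \<Rightarrow> (nat \<Rightarrow> nat \<Rightarrow> nat) \<Rightarrow> bool" where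
  "greedy A T S Q pol \<longleftrightarrow>
     (\<forall>t\<in>{1..T}. \<forall>s\<in>S. pol t s < A \<and> (\<forall>a<A. Q t s a \<le> Q t s (pol t s)))"

definition Qiter :: "nat \<Rightarrow> nat \<Rightarrow> (nat \<Rightarrow> nat \<Rightarrow> nat) \<Rightarrow> (nat \<Rightarrow> nat \<Rightarrow> real)
              \<Rightarrow> nat \<Rightarrow> nat \<Rightarrow> nat \<Rightarrow> nat \<Rightarrow> real" where
  "Qiter A T f R i = (QVI A T f R ^^ (i - 1)) (Qpol A T f R (rand_policy A))"

end

theory Submission
  imports Defs
begin

definition ff :: "nat \<Rightarrow> nat \<Rightarrow> nat" where
  "ff s a = (if s = 0 then (if a = 0 then 1 else 2) else s)"

definition RR :: "nat \<Rightarrow> nat \<Rightarrow> nat \<Rightarrow> real" where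
  "RR T s a = (if s = 0 \<and> a = 0 then real T - 5/4 else if s = 2 \<and> a = 0 then 1 else 0)"

definition gg :: "nat \<Rightarrow> nat \<Rightarrow> nat \<Rightarrow> real" where
  "gg A i m = real (min (i-1) m) + real (m - min (i-1) m) / real A"

lemma ff_simps[simp]: "ff (Suc 0) a = Suc 0" "ff 2 a = 2" "ff 0 0 = Suc 0" "a \<noteq> 0 \<Longrightarrow> ff 0 a = 2"
  by (simp_all add: ff_def)

lemma rp[simp]: "rand_policy A t s a = 1 / real A"
  by (simp add: rand_policy_def)

lemma V1: "Vrem A T ff (RR T) pol k (Suc 0) = 0"
  by (induction k) (simp_all add: RR_def)

lemma sumR2: "0 < A \<Longrightarrow> (\<Sum>a<A. RR T 2 a) = 1"
  by (simp add: RR_def)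

lemma V2: assumes "0 < A" shows "Vrem A T ff (RR T) (rand_policy A) k 2 = real k / real A"
proof (induction k)
  case 0 then show ?case by simp
next
  case (Suc k)
  have "Vrem A T ff (RR T) (rand_policy A) (Suc k) 2 = (\<Sum>a<A. (1/real A) * RR T 2 a + (1/real A) * (real k / real A))"
    by (simp add: Suc.IH algebra_simps del: rp) (simp add: rand_policy_def)
  also have "\<dots> = (1/real A) * (\<Sum>a<A. RR T 2 a) + real A * ((1/real A) * (real k / real A))"
    by (simp add: sum.distrib sum_distrib_left)
  also have "\<dots> = real (Suc k) / real A" using assms sumR2[OF assms] by (simp add: field_simps)
  finally show ?case .
qed

definition pgood :: "nat \<Rightarrow> nat \<Rightarrow> nat" where
  "pgood t s = (if s = 0 then 1 else 0)"

lemma sum_ind: "(b::nat) < A \<Longrightarrow> (\<Sum>a<A. (if a = b then 1 else 0) * (g a::real)) = g b"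
proof -
  assume "b < A"
  have "(\<Sum>a<A. (if a = b then 1 else 0) * g a) = (\<Sum>a<A. if a = b then g a else 0)"
    by (rule sum.cong) auto
  also have "\<dots> = g b" using \<open>b < A\<close> by (subst sum.delta) auto
  finally show ?thesis .
qed

lemma V3: assumes "0 < A" shows "Vrem A T ff (RR T) (det_policy pgood) k 2 = real k"
proof (induction k)
  case 0 then show ?case by simp
next
  case (Suc k)
  have "Vrem A T ff (RR T) (det_policy pgood) (Suc k) 2 =
     (\<Sum>a<A. (if a = 0 then 1 else 0) * (RR T 2 a + Vrem A T ff (RR T) (det_policy pgood) k 2))"
    by (simp add: det_policy_def pgood_def)
  also have "\<dots> = RR T 2 0 + Vrem A T ff (RR T) (det_policy pgood) k 2"
    using sum_ind[OF assms, of "\<lambda>a. RR T 2 a + Vrem A T ff (RR T) (det_policy pgood) k 2"] by simp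
  also have "\<dots> = real (Suc k)" by (simp add: Suc.IH) (simp add: RR_def)
  finally show ?case .
qed

lemma Qiter_Suc: "1 \<le> i \<Longrightarrow> Qiter A T f R (Suc i) = QVI A T f R (Qiter A T f R i)"
  by (cases i) (simp_all add: Qiter_def)

lemma Max_R2: assumes "0 < A" shows "Max ((\<lambda>a'. RR T 2 a' + c) ` {..<A}) = 1 + c"
  by (rule Max_eqI) (use assms in \<open>auto simp: RR_def image_iff intro!: bexI[of _ 0]\<close>)

lemma Q1: assumes "0 < A" "1 \<le> i" shows "Qiter A T ff (RR T) i t (Suc 0) a = 0"
  using assms(2)
proof (induction i arbitrary: t a rule: dec_induct)
  case base then show ?case by (simp add: Qiter_def Qpol_def V1) (simp add: RR_def)
next
  case (step i)
  have e: "(\<lambda>a'. Qiter A T ff (RR T) i (Suc t) (Suc 0) a') ` {..<A} = {0}" using step assms by auto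
  show ?case using step assms(1) by (simp add: Qiter_Suc QVI_def e) (auto simp: RR_def image_constant_conv)
qed

lemma gg_step: assumes "1 \<le> i" "1 \<le> m" shows "1 + gg A i (m - 1) = gg A (Suc i) m"
proof (cases "i \<le> m")
  case True
  then have "min (i-1) (m-1) = i - 1" "min i m = i" by auto
  then show ?thesis using assms True unfolding gg_def by (simp add: of_nat_diff)
next
  case False
  then have "min (i-1) (m-1) = m - 1" "min i m = m" by auto
  then show ?thesis using assms False unfolding gg_def by (simp add: of_nat_diff)
qed

lemma Q2: assumes "0 < A" "1 \<le> i" shows "Qiter A T ff (RR T) i t 2 a = RR T 2 a + gg A i (T - t)"
  using assms(2)
proof (induction i arbitrary: t a rule: dec_induct)
  case base then show ?case using V2[OF assms(1)] by (simp add: Qiter_def Qpol_def gg_def)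
next
  case (step i)
  show ?case
  proof (cases "t < T")
    case True
    have "Qiter A T ff (RR T) (Suc i) t 2 a = RR T 2 a + Max ((\<lambda>a'. RR T 2 a' + gg A i (T - Suc t)) ` {..<A})"
      using step True by (simp add: Qiter_Suc QVI_def)
    also have "\<dots> = RR T 2 a + (1 + gg A i (T - t - 1))" using Max_R2[OF assms(1)] by simp
    also have "\<dots> = RR T 2 a + gg A (Suc i) (T - t)" using gg_step[of i "T - t" A] step True by simp
    finally show ?thesis .
  next
    case False
    then show ?thesis using step by (simp add: Qiter_Suc QVI_def gg_def)
  qed
qed

lemma Q00: assumes "0 < A" "1 \<le> i" "i \<le> T - 1"
  shows "Qiter A T ff (RR T) i 1 0 0 = real T - 5/4"
proof (cases i)
  case 0 then show ?thesis using assms by simp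
next
  case (Suc j)
  show ?thesis
  proof (cases j)
    case 0 then show ?thesis using Suc assms
      by (simp add: Qiter_def Qpol_def V1) (simp add: RR_def)
  next
    case (Suc k)
    have j1: "1 \<le> j" using Suc by simp
    have e: "(\<lambda>a'. Qiter A T ff (RR T) j (Suc (Suc 0)) (Suc 0) a') ` {..<A} = {0}"
      using Q1[OF assms(1) j1] assms by auto
    have "1 < T" using assms Suc \<open>i = Suc j\<close> by simp
    then show ?thesis using \<open>i = Suc j\<close> Qiter_Suc[OF j1, of A T ff "RR T"]
      by (simp add: QVI_def e) (simp add: RR_def)
  qed
qed

lemma Q0a: assumes "0 < A" "1 \<le> i" "i \<le> T - 1" "a \<noteq> 0"
  shows "Qiter A T ff (RR T) i 1 0 a = real i - 1 + real (T - i) / real A"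
proof (cases i)
  case 0 then show ?thesis using assms by simp
next
  case (Suc j)
  show ?thesis
  proof (cases j)
    case 0 then show ?thesis using Suc assms V2[OF assms(1)]
      by (simp add: Qiter_def Qpol_def) (simp add: RR_def)
  next
    case (Suc k)
    have "1 < T" using assms Suc \<open>i = Suc j\<close> by simp
    have "k \<le> T - 2" using Suc \<open>i = Suc j\<close> assms by simp
    have q: "Qiter A T ff (RR T) i 1 0 a = RR T 0 a + Max ((\<lambda>a'. Qiter A T ff (RR T) j 2 2 a') ` {..<A})"
      using \<open>1 < T\<close> Suc \<open>i = Suc j\<close> Qiter_Suc[of j A T ff "RR T"] assms
      by (simp add: QVI_def numeral_2_eq_2)
    have "(\<lambda>a'. Qiter A T ff (RR T) j 2 2 a') = (\<lambda>a'. RR T 2 a' + gg A j (T - 2))"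
      using Q2[OF assms(1), of j] Suc by auto
    then have "Qiter A T ff (RR T) i 1 0 a = 1 + gg A j (T - 2)"
      using q Max_R2[OF assms(1)] assms(4) by (simp add: RR_def)
    also have "1 + gg A j (T - 2) = real i - 1 + real (T - i) / real A"
      using \<open>k \<le> T - 2\<close> Suc \<open>i = Suc j\<close> assms unfolding gg_def
      by (simp add: min_def of_nat_diff)
    finally show ?thesis .
  qed
qed


theorem mainTheorem2:
  fixes T A :: nat
  assumes "T \<ge> 1" and "A \<ge> 2"
  shows "\<exists>(S::nat set) s1 f R. valid_mdp A S s1 f \<and>
           (\<forall>i\<in>{1..T-1}. \<forall>pol. greedy A T S (Qiter A T f R i) pol \<longrightarrow>
               \<not> optimal A T S s1 f R (det_policy pol))"
proof (intro exI conjI ballI allI impI)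
  have A0: "0 < A" using assms by simp
  show "valid_mdp A {0,1,2} 0 ff"
    unfolding valid_mdp_def by (auto simp: ff_def)
  fix i pol
  assume i: "i \<in> {1..T-1}" and g: "greedy A T {0,1,2} (Qiter A T ff (RR T) i) pol"
  have i1: "1 \<le> i" "i \<le> T - 1" using i by auto
  have T1: "1 \<le> T" using assms by simp
  have pA: "pol 1 0 < A" and pmax: "\<forall>a<A. Qiter A T ff (RR T) i 1 0 a \<le> Qiter A T ff (RR T) i 1 0 (pol 1 0)"
    using g T1 unfolding greedy_def by auto
  have ineq: "real i - 1 + real (T - i) / real A < real T - 5/4"
  proof -
    have "real (T - i) / real A \<le> real (T - i) / 2"
      using assms by (intro divide_left_mono) auto
    moreover have "real (T - i) = real T - real i" "real T - real i \<ge> 1" using i1 by auto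
    ultimately show ?thesis by linarith
  qed
  have p0: "pol 1 0 = 0"
  proof (rule ccontr)
    assume "pol 1 0 \<noteq> 0"
    then have "Qiter A T ff (RR T) i 1 0 (pol 1 0) = real i - 1 + real (T - i) / real A"
      using Q0a[OF A0 i1] by simp
    moreover have "Qiter A T ff (RR T) i 1 0 0 = real T - 5/4" using Q00[OF A0 i1] .
    moreover have "Qiter A T ff (RR T) i 1 0 0 \<le> Qiter A T ff (RR T) i 1 0 (pol 1 0)"
      using pmax A0 by blast
    ultimately show False using ineq by linarith
  qed
  obtain m where Tm: "T = Suc m" using T1 by (cases T) auto
  have J1: "Jval A T 0 ff (RR T) (det_policy pol) = real T - 5/4"
    unfolding Jval_def using Tm A0 p0
    by (simp add: det_policy_def sum_ind V1 del: of_nat_Suc) (simp add: RR_def)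
  have J2: "Jval A T 0 ff (RR T) (det_policy pgood) = real T - 1"
    unfolding Jval_def using Tm A0 assms V3[OF A0]
    by (simp add: det_policy_def pgood_def sum_ind del: of_nat_Suc) (simp add: RR_def)
  have pol_g: "is_policy A T {0,1,2} (det_policy pgood)"
    unfolding is_policy_def det_policy_def pgood_def using assms by auto
  show "\<not> optimal A T {0,1,2} 0 ff (RR T) (det_policy pol)"
    unfolding optimal_def using pol_g J1 J2 by fastforce
qed

end
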